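(* Let $G$ be a bipartite graph with bipartition $(X,Y)$, $|X| = n\geq 2$, $|Y|=m$, every $x\in X$ having degree at least $\delta$. Let $(C,x)$ be a tight pair in $G$, with $C = y_1x_1y_2x_2\ldots y_\ell x_\ell y_1$ where $x_i \in X$, $y_i \in Y$. Let $1\le i<j\le \ell$. If $x_i$ and $x_j$ are not crossing in $C$, then $|N(x_i)\cap V(C)| + |N(x_j)\cap V(C)| \leq |V(C)\cap Y| + 2$.
   Context: A tight pair in $G$ is a pair $(C,x)$ where $C$ is a longest cycle in $G$ and $x \in X \setminus V(C)$, chosen such that $|N(x)\cap V(C)|$ is maximum over all pairs $(C',x')$ with $C'$ a longest cycle and $x' \in X\setminus V(C')$. Indices of $C$ are taken modulo $\ell$; for $1\le a,b\le \ell$, $C[a,b]$ denotes the segment of $C$ traversed in the direction $y_1\to x_1 \to y_2 \to \cdots$ from $y_a$ to $y_b$. For $1\le i<j\le\ell$, $x_i$ and $x_j$ are crossing in $C$ if there are indices $i',j'\in[\ell]$ with $y_{i'}\in N(x_i)$, $y_{j'}\in N(x_j)$, and either (a) $i' = j'+1$ with $i+1\le j'\le j-1$ (so $y_{i'},y_{j'} \in V(C[i+1,j])$), or (b) $j' = i'+1 \pmod \ell$ and $y_{i'},y_{j'}\in V(C[j+1,i])$. *)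

theory Defs
  imports Main
begin

definition bipartite_graph :: "'a set \<Rightarrow> 'a set \<Rightarrow> ('a \<Rightarrow> 'a \<Rightarrow> bool) \<Rightarrow> bool" where
  "bipartite_graph X Y E \<longleftrightarrow> finite X \<and> finite Y \<and> X \<inter> Y = {} \<and>
     (\<forall>u v. E u v \<longrightarrow> E v u) \<and>
     (\<forall>u v. E u v \<longrightarrow> (u \<in> X \<and> v \<in> Y) \<or> (u \<in> Y \<and> v \<in> X))"

definition nbhd :: "('a \<Rightarrow> 'a \<Rightarrow> bool) \<Rightarrow> 'a \<Rightarrow> 'a set" where
  "nbhd E v = {u. E v u}"

definition is_cycle :: "('a \<Rightarrow> 'a \<Rightarrow> bool) \<Rightarrow> 'a list \<Rightarrow> bool" where
  "is_cycle E vs \<longleftrightarrow> length vs \<ge> 3 \<and> distinct vs \<and>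
     (\<forall>k < length vs. E (vs ! k) (vs ! ((k + 1) mod length vs)))"

definition longest_cycle :: "('a \<Rightarrow> 'a \<Rightarrow> bool) \<Rightarrow> 'a list \<Rightarrow> bool" where
  "longest_cycle E C \<longleftrightarrow> is_cycle E C \<and> (\<forall>C'. is_cycle E C' \<longrightarrow> length C' \<le> length C)"

definition tight_pair :: "'a set \<Rightarrow> ('a \<Rightarrow> 'a \<Rightarrow> bool) \<Rightarrow> 'a list \<Rightarrow> 'a \<Rightarrow> bool" where
  "tight_pair X E C x \<longleftrightarrow> longest_cycle E C \<and> x \<in> X - set C \<and>
     (\<forall>C' x'. longest_cycle E C' \<and> x' \<in> X - set C' \<longrightarrow>
        card (nbhd E x' \<inter> set C') \<le> card (nbhd E x \<inter> set C))"

definition cyc_list :: "(nat \<Rightarrow> 'a) \<Rightarrow> (nat \<Rightarrow> 'a) \<Rightarrow> nat \<Rightarrow> 'a list" where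
  "cyc_list ys xs l = concat (map (\<lambda>k. [ys k, xs k]) [1..<l+1])"

text \<open>Indices taken modulo l, represented in [1..l].\<close>
definition cyc_idx :: "nat \<Rightarrow> nat \<Rightarrow> nat" where
  "cyc_idx l k = (k + l - 1) mod l + 1"

text \<open>Indices k of the y_k met going from y_a to y_b in the cycle direction.\<close>
definition cyc_range :: "nat \<Rightarrow> nat \<Rightarrow> nat \<Rightarrow> nat set" where
  "cyc_range l a b = (let a' = cyc_idx l a; b' = cyc_idx l b in
     if a' \<le> b' then {a'..b'} else {a'..l} \<union> {1..b'})"

definition seg_vertices :: "(nat \<Rightarrow> 'a) \<Rightarrow> (nat \<Rightarrow> 'a) \<Rightarrow> nat \<Rightarrow> nat \<Rightarrow> nat \<Rightarrow> 'a set" where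
  "seg_vertices ys xs l a b =
     ys ` cyc_range l a b \<union> xs ` (cyc_range l a b - {cyc_idx l b})"

definition crossing :: "('a \<Rightarrow> 'a \<Rightarrow> bool) \<Rightarrow> (nat \<Rightarrow> 'a) \<Rightarrow> (nat \<Rightarrow> 'a) \<Rightarrow> nat \<Rightarrow> nat \<Rightarrow> nat \<Rightarrow> bool" where
  "crossing E ys xs l i j \<longleftrightarrow>
     (\<exists>i' \<in> {1..l}. \<exists>j' \<in> {1..l}. ys i' \<in> nbhd E (xs i) \<and> ys j' \<in> nbhd E (xs j) \<and>
        ((i' = j' + 1 \<and> i + 1 \<le> j' \<and> j' \<le> j - 1) \<or>
         (j' = cyc_idx l (i' + 1) \<and> ys i' \<in> seg_vertices ys xs l (j + 1) i
            \<and> ys j' \<in> seg_vertices ys xs l (j + 1) i)))"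

end

theory Submission
  imports Defs
begin

lemma count:
  fixes A B :: "nat set"
  assumes AB: "A \<subseteq> {1..l}" "B \<subseteq> {1..l}" and ij: "1 \<le> i" "i<j" "j \<le> l"
  and a: "\<And>k. i+1 \<le> k \<Longrightarrow> k \<le> j-1 \<Longrightarrow> k \<in> B \<Longrightarrow> k+1 \<in> A \<Longrightarrow> False"
  and b: "\<And>k. k \<in> {1..l} - {i+1..j} \<Longrightarrow> k \<noteq> i \<Longrightarrow> k \<in> A \<Longrightarrow> (if k = l then 1 else k+1) \<in> B \<Longrightarrow> False"
  shows "card A + card B \<le> l + 2"
proof -
  define P where "P = {i+1..j}"
  define Q where "Q = {1..l} - P"
  define nx where "nx = (\<lambda>k::nat. if k = l then 1 else k+1)"
  have fA: "finite A" "finite B" using AB finite_subset by blast+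
  have cA: "card A = card (A\<inter>P) + card (A\<inter>Q)"
  proof -
    have "A = (A\<inter>P) \<union> (A\<inter>Q)" using AB by (auto simp: Q_def P_def)
    moreover have "(A\<inter>P) \<inter> (A\<inter>Q) = {}" by (auto simp: Q_def)
    ultimately show ?thesis using fA by (metis card_Un_disjoint finite_Int)
  qed
  have cB: "card B = card (B\<inter>P) + card (B\<inter>Q)"
  proof -
    have "B = (B\<inter>P) \<union> (B\<inter>Q)" using AB by (auto simp: Q_def P_def)
    moreover have "(B\<inter>P) \<inter> (B\<inter>Q) = {}" by (auto simp: Q_def)
    ultimately show ?thesis using fA by (metis card_Un_disjoint finite_Int)
  qed
  have partP: "card (A\<inter>P) + card (B\<inter>P) \<le> j - i + 1"
  proof -
    define B1 where "B1 = B \<inter> {i+1..j-1}"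
    have "Suc ` B1 \<subseteq> {i+2..j} - A" using a ij by (auto simp: B1_def)
    hence "card (Suc ` B1) \<le> card ({i+2..j} - A)" by (intro card_mono) auto
    moreover have "card (Suc ` B1) = card B1" by (simp add: card_image)
    moreover have "card ({i+2..j} - A) = card {i+2..j} - card (A \<inter> {i+2..j})"
      by (metis Diff_Int2 card_Diff_subset_Int finite_Int finite_atLeastAtMost inf.idem inf_commute)
    moreover have "card (A \<inter> {i+2..j}) \<le> card {i+2..j}" by (intro card_mono) auto
    moreover have "card (A\<inter>P) \<le> card (A \<inter> {i+2..j}) + 1"
    proof -
      have "A\<inter>P \<subseteq> insert (i+1) (A \<inter> {i+2..j})" by (auto simp: P_def)
      hence "card (A\<inter>P) \<le> card (insert (i+1) (A \<inter> {i+2..j}))" by (intro card_mono) auto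
      also have "\<dots> \<le> card (A \<inter> {i+2..j}) + 1" by (simp add: card_insert_le_m1)
      finally show ?thesis .
    qed
    moreover have "card (B\<inter>P) \<le> card B1 + 1"
    proof -
      have "B\<inter>P \<subseteq> insert j B1" by (auto simp: P_def B1_def)
      hence "card (B\<inter>P) \<le> card (insert j B1)" by (intro card_mono) (auto simp: B1_def)
      also have "\<dots> \<le> card B1 + 1" by (simp add: card_insert_le_m1 B1_def)
      finally show ?thesis .
    qed
    ultimately show ?thesis using ij by simp
  qed
  have partQ: "card (A\<inter>Q) + card (B\<inter>Q) \<le> card Q + 1"
  proof -
    define s where "s = nx j"
    have sQ: "s \<in> Q" using ij by (auto simp: s_def nx_def Q_def P_def)
    have fQ: "finite Q" by (simp add: Q_def)
    define A1 where "A1 = A \<inter> (Q - {i})"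
    have "nx ` A1 \<subseteq> (Q - {s}) - B"
    proof
      fix y assume "y \<in> nx ` A1"
      then obtain k where k: "k \<in> A1" "y = nx k" by auto
      have "k \<in> {1..l} - {i+1..j}" "k \<noteq> i" "k \<in> A" using k by (auto simp: A1_def Q_def P_def)
      hence "y \<notin> B" using b[of k] k(2) unfolding nx_def by blast
      moreover have "y \<in> Q - {s}" using k ij \<open>k \<in> {1..l} - {i+1..j}\<close> \<open>k \<noteq> i\<close>
        by (auto simp: nx_def s_def Q_def P_def split: if_splits)
      ultimately show "y \<in> (Q - {s}) - B" by simp
    qed
    hence "card (nx ` A1) \<le> card ((Q - {s}) - B)" by (rule card_mono[rotated]) (simp add: fQ)
    moreover have "inj_on nx {1..l}"
      unfolding inj_on_def nx_def by simp
    hence "inj_on nx A1" by (rule inj_on_subset) (auto simp: A1_def Q_def)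
    hence "card (nx ` A1) = card A1" by (simp add: card_image)
    moreover have "card ((Q - {s}) - B) = card (Q - {s}) - card (B \<inter> (Q - {s}))"
      using fQ by (metis Diff_Int2 card_Diff_subset_Int finite_Diff finite_Int inf.idem inf_commute)
    moreover have "card (B \<inter> (Q - {s})) \<le> card (Q - {s})" using fQ by (intro card_mono) auto
    moreover have "card (Q - {s}) = card Q - 1" using sQ fQ by simp
    moreover have "card Q \<ge> 1" using sQ fQ by (metis One_nat_def Suc_leI card_gt_0_iff empty_iff)
    moreover have "card (A\<inter>Q) \<le> card A1 + 1"
    proof -
      have "A\<inter>Q \<subseteq> insert i A1" by (auto simp: A1_def)
      hence "card (A\<inter>Q) \<le> card (insert i A1)" using fA by (intro card_mono) (auto simp: A1_def)
      also have "\<dots> \<le> card A1 + 1" using fA by (simp add: card_insert_le_m1 A1_def)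
      finally show ?thesis .
    qed
    moreover have "card (B\<inter>Q) \<le> card (B \<inter> (Q - {s})) + 1"
    proof -
      have "B\<inter>Q \<subseteq> insert s (B \<inter> (Q - {s}))" by auto
      hence "card (B\<inter>Q) \<le> card (insert s (B \<inter> (Q - {s})))" using fA by (intro card_mono) auto
      also have "\<dots> \<le> card (B \<inter> (Q - {s})) + 1" using fA by (simp add: card_insert_le_m1)
      finally show ?thesis .
    qed
    ultimately show ?thesis by linarith
  qed
  have "card Q = l - (j - i)"
  proof -
    have "card Q = card {1..l} - card P" unfolding Q_def
      by (rule card_Diff_subset) (use ij in \<open>auto simp: P_def\<close>)
    thus ?thesis using ij by (simp add: P_def)
  qed
  thus ?thesis using cA cB partP partQ ij by linarith
qed

lemma cyc_list_Suc: "cyc_list ys xs (Suc l) = cyc_list ys xs l @ [ys (Suc l), xs (Suc l)]"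
  by (simp add: cyc_list_def)

lemma set_cyc_list: "set (cyc_list ys xs l) = ys ` {1..l} \<union> xs ` {1..l}"
  by (induction l) (auto simp: cyc_list_Suc, auto simp: cyc_list_def le_Suc_eq)

lemma inj_cyc: "distinct (cyc_list ys xs l) \<Longrightarrow> inj_on ys {1..l}"
proof (induction l)
  case 0 then show ?case by simp
next
  case (Suc l)
  have d: "distinct (cyc_list ys xs l)" "ys (Suc l) \<notin> set (cyc_list ys xs l)"
    using Suc.prems by (auto simp: cyc_list_Suc)
  have "inj_on ys {1..l}" using Suc.IH d by simp
  moreover have "ys (Suc l) \<notin> ys ` {1..l}" using d(2) by (simp add: set_cyc_list)
  moreover have "{1..Suc l} = insert (Suc l) {1..l}" by auto
  ultimately show ?case by simp
qed

lemma cyc_idx_succ: "1 \<le> k \<Longrightarrow> k \<le> l \<Longrightarrow> cyc_idx l (Suc k) = (if k = l then 1 else k+1)"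
proof -
  assume k: "1 \<le> k" "k \<le> l"
  have e: "Suc k + l - 1 = k + l" by simp
  show ?thesis
  proof (cases "k = l")
    case True then show ?thesis by (simp add: cyc_idx_def e)
  next
    case False then have "k < l" using k by simp
    then have "(k + l) mod l = k" by (simp add: mod_add_self2)
    then show ?thesis using False by (simp add: cyc_idx_def e)
  qed
qed

lemma cyc_idx_id: "1 \<le> k \<Longrightarrow> k \<le> l \<Longrightarrow> cyc_idx l k = k"
proof -
  assume k: "1 \<le> k" "k \<le> l"
  have e: "k + l - 1 = (k - 1) + l" using k by simp
  have "k - 1 < l" using k by simp
  hence "((k - 1) + l) mod l = k - 1" by (metis mod_add_self2 mod_less)
  then show ?thesis using k unfolding cyc_idx_def e by simp
qed

lemma cyc_range_Q: "1 \<le> i \<Longrightarrow> i < j \<Longrightarrow> j \<le> l \<Longrightarrow> cyc_range l (Suc j) i = {1..l} - {i+1..j}"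
proof -
  assume ij: "1 \<le> i" "i < j" "j \<le> l"
  have a: "cyc_idx l (Suc j) = (if j = l then 1 else j+1)" using ij by (simp add: cyc_idx_succ)
  have b: "cyc_idx l i = i" using ij by (simp add: cyc_idx_id)
  show ?thesis using ij unfolding cyc_range_def Let_def a b by auto
qed

theorem lemma1:
  fixes X Y :: "'a set" and E :: "'a \<Rightarrow> 'a \<Rightarrow> bool"
    and n m \<delta> l i j :: nat and ys xs :: "nat \<Rightarrow> 'a" and x :: 'a
  assumes "bipartite_graph X Y E"
    and "card X = n" and "n \<ge> 2" and "card Y = m"
    and "\<forall>v \<in> X. card (nbhd E v) \<ge> \<delta>"
    and "tight_pair X E (cyc_list ys xs l) x"
    and "\<forall>k \<in> {1..l}. xs k \<in> X \<and> ys k \<in> Y"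
    and "1 \<le> i" and "i < j" and "j \<le> l"
    and "\<not> crossing E ys xs l i j"
  shows "card (nbhd E (xs i) \<inter> set (cyc_list ys xs l))
         + card (nbhd E (xs j) \<inter> set (cyc_list ys xs l))
         \<le> card (set (cyc_list ys xs l) \<inter> Y) + 2"
proof -
  note bg = assms(1)[unfolded bipartite_graph_def]
  have dist: "distinct (cyc_list ys xs l)"
    using assms(6) by (simp add: tight_pair_def longest_cycle_def is_cycle_def)
  have inj: "inj_on ys {1..l}" using inj_cyc[OF dist] .
  define A where "A = {k\<in>{1..l}. E (xs i) (ys k)}"
  define B where "B = {k\<in>{1..l}. E (xs j) (ys k)}"
  have xiX: "xs i \<in> X" "xs j \<in> X" using assms(7-10) by auto
  have noXX: "\<And>u v. u \<in> X \<Longrightarrow> v \<in> X \<Longrightarrow> \<not> E u v" using bg by blast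
  have NA: "nbhd E (xs i) \<inter> set (cyc_list ys xs l) = ys ` A"
    using xiX assms(7) noXX by (auto simp: nbhd_def set_cyc_list A_def)
  have NB: "nbhd E (xs j) \<inter> set (cyc_list ys xs l) = ys ` B"
    using xiX assms(7) noXX by (auto simp: nbhd_def set_cyc_list B_def)
  have NY: "set (cyc_list ys xs l) \<inter> Y = ys ` {1..l}"
    using assms(7) bg by (auto simp: set_cyc_list)
  have cA: "card (ys ` A) = card A" using inj by (intro card_image, rule inj_on_subset) (auto simp: A_def)
  have cB: "card (ys ` B) = card B" using inj by (intro card_image, rule inj_on_subset) (auto simp: B_def)
  have cY: "card (ys ` {1..l}) = l" using inj by (simp add: card_image)
  have "card A + card B \<le> l + 2"
  proof (rule count)
    show "A \<subseteq> {1..l}" "B \<subseteq> {1..l}" by (auto simp: A_def B_def)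
    show "1 \<le> i" "i < j" "j \<le> l" using assms by auto
  next
    fix k assume k: "i + 1 \<le> k" "k \<le> j - 1" "k \<in> B" "k + 1 \<in> A"
    have "crossing E ys xs l i j"
      unfolding crossing_def
      apply (rule bexI[of _ "k+1"], rule bexI[of _ k])
      using k assms(8-10) by (auto simp: A_def B_def nbhd_def)
    thus False using assms(11) by blast
  next
    fix k assume k: "k \<in> {1..l} - {i + 1..j}" "k \<noteq> i" "k \<in> A" "(if k = l then 1 else k + 1) \<in> B"
    have ij: "1 \<le> i" "i < j" "j \<le> l" using assms by auto
    have nxQ: "(if k = l then 1 else k + 1) \<in> {1..l} - {i + 1..j}"
      using k ij by (auto split: if_splits)
    have kl: "1 \<le> k" "k \<le> l" using k by auto
    have "crossing E ys xs l i j"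
      unfolding crossing_def
      apply (rule bexI[of _ k], rule bexI[of _ "if k = l then 1 else k + 1"])
      using k kl nxQ ij
      by (auto simp: A_def B_def nbhd_def cyc_idx_succ seg_vertices_def cyc_range_Q)
    thus False using assms(11) by blast
  qed
  thus ?thesis using NA NB NY cA cB cY by simp
qed

end
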